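(* Let $m\ge2$, let $\mathbb{A}=(a_{i_1\ldots i_m})$ be a nonnegative tensor of order $m$ and dimension $n$, and let $\mathbb{B}=(b_{i_1\ldots i_{m+1}})$ be the nonnegative tensor of order $m+1$ and dimension $n$ with $b_{i_1\ldots i_mi_{m+1}}=a_{i_1\ldots i_m}$ if $i_{m+1}=i_m$ and $b_{i_1\ldots i_mi_{m+1}}=0$ otherwise. Then (i) for every $j\in[n]$, $\mathbb{A}$ is $j$-primitive if and only if $\mathbb{B}$ is $j$-primitive, and in that case $\gamma_j(\mathbb{B})=\gamma_j(\mathbb{A})$; (ii) $\mathbb{A}$ is primitive if and only if $\mathbb{B}$ is primitive, and then $\gamma(\mathbb{B})=\gamma(\mathbb{A})$.
   Context: General product of dimension-$n$ tensors: for $\mathbb{A}$ of order $m\ge2$ and $\mathbb{C}$ of order $k\ge1$, $(\mathbb{A}\mathbb{C})_{i\alpha_1\ldots\alpha_{m-1}}=\sum_{i_2,\ldots,i_m=1}^n a_{ii_2\ldots i_m}c_{i_2\alpha_1}\cdots c_{i_m\alpha_{m-1}}$ ($\alpha_l\in[n]^{k-1}$); it is associative and $\mathbb{A}^k$ denotes the $k$-fold power. The majorization matrix is $(M(\mathbb{C}))_{ij}=c_{ij\ldots j}$. A nonnegative tensor $\mathbb{A}$ is primitive if $M(\mathbb{A}^r)>0$ entrywise for some $r\ge1$, and the least such $r$ is $\gamma(\mathbb{A})$. For $j\in[n]$, $\mathbb{A}$ is $j$-primitive if there is $k\ge1$ with $(M(\mathbb{A}^k))_{uj}>0$ for all $u\in[n]$;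 the least such $k$ is $\gamma_j(\mathbb{A})$. *)

theory Defs
  imports Complex_Main
begin

text \<open>Tensors of order m and dimension n are represented as functions
  nat list => real; only index lists of length m with entries in {0..<n}
  are meaningful (the index set [n] is rendered 0-based as {0..<n}).\<close>

type_synonym tensor = "nat list \<Rightarrow> real"

definition valid_idx :: "nat \<Rightarrow> nat \<Rightarrow> nat list \<Rightarrow> bool" where
  "valid_idx n k xs \<longleftrightarrow> length xs = k \<and> set xs \<subseteq> {..<n}"

definition nonneg_tensor :: "nat \<Rightarrow> nat \<Rightarrow> tensor \<Rightarrow> bool" where
  "nonneg_tensor n m A \<longleftrightarrow> (\<forall>xs. valid_idx n m xs \<longrightarrow> A xs \<ge> 0)"

fun chunks :: "nat \<Rightarrow> nat \<Rightarrow> 'a list \<Rightarrow> 'a list list" where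
  "chunks 0 l xs = []"
| "chunks (Suc c) l xs = take l xs # chunks c l (drop l xs)"

text \<open>General product: A of order m, C of order k, both of dimension n.
  (A C)_{i alpha_1 ... alpha_{m-1}} =
     sum_{i_2..i_m} a_{i i_2 .. i_m} c_{i_2 alpha_1} ... c_{i_m alpha_{m-1}}.\<close>
definition tprod :: "nat \<Rightarrow> nat \<Rightarrow> nat \<Rightarrow> tensor \<Rightarrow> tensor \<Rightarrow> tensor" where
  "tprod n m k A C = (\<lambda>idx.
     \<Sum>is\<in>{is. valid_idx n (m - 1) is}.
       A (hd idx # is) *
       (\<Prod>l<m - 1. C ((is ! l) # (chunks (m - 1) (k - 1) (tl idx) ! l))))"

text \<open>Powers A^r (r >= 1) of a tensor of order m; A^r has order (m-1)^r + 1.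
  A^(r+1) = A A^r.  The value at r = 0 is an unused placeholder.\<close>
primrec tpow :: "nat \<Rightarrow> nat \<Rightarrow> tensor \<Rightarrow> nat \<Rightarrow> tensor" where
  "tpow n m A 0 = A"
| "tpow n m A (Suc r) =
     (if r = 0 then A else tprod n m ((m - 1) ^ r + 1) A (tpow n m A r))"

definition tpow_order :: "nat \<Rightarrow> nat \<Rightarrow> nat" where
  "tpow_order m r = (m - 1) ^ r + 1"

definition majorization :: "nat \<Rightarrow> tensor \<Rightarrow> nat \<Rightarrow> nat \<Rightarrow> real" where
  "majorization k C i j = C (i # replicate (k - 1) j)"

definition Mpow :: "nat \<Rightarrow> nat \<Rightarrow> tensor \<Rightarrow> nat \<Rightarrow> nat \<Rightarrow> nat \<Rightarrow> real" where
  "Mpow n m A r = majorization (tpow_order m r) (tpow n m A r)"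

definition primitive :: "nat \<Rightarrow> nat \<Rightarrow> tensor \<Rightarrow> bool" where
  "primitive n m A \<longleftrightarrow> (\<exists>r\<ge>1. \<forall>i<n. \<forall>j<n. Mpow n m A r i j > 0)"

definition prim_exponent :: "nat \<Rightarrow> nat \<Rightarrow> tensor \<Rightarrow> nat" where
  "prim_exponent n m A = (LEAST r. r \<ge> 1 \<and> (\<forall>i<n. \<forall>j<n. Mpow n m A r i j > 0))"

definition j_primitive :: "nat \<Rightarrow> nat \<Rightarrow> tensor \<Rightarrow> nat \<Rightarrow> bool" where
  "j_primitive n m A j \<longleftrightarrow> (\<exists>k\<ge>1. \<forall>u<n. Mpow n m A k u j > 0)"

definition j_prim_exponent :: "nat \<Rightarrow> nat \<Rightarrow> tensor \<Rightarrow> nat \<Rightarrow> nat" where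
  "j_prim_exponent n m A j = (LEAST k. k \<ge> 1 \<and> (\<forall>u<n. Mpow n m A k u j > 0))"

end

theory Submission
  imports Defs
begin

lemma chunks_rep: "c*l \<le> N \<Longrightarrow> k < c \<Longrightarrow> chunks c l (replicate N x) ! k = replicate l x"
proof (induction c arbitrary: N k)
  case 0 then show ?case by simp
next
  case (Suc c)
  show ?case
  proof (cases k)
    case 0 then show ?thesis using Suc.prems by (simp add: min_def)
  next
    case (Suc k')
    then show ?thesis using Suc.prems Suc.IH[of "N - l" k'] by simp
  qed
qed

lemma Mpow_one: "Mpow n m T 1 i j = T (i # replicate (m-1) j)"
  by (simp add: Mpow_def majorization_def tpow_order_def)

lemma Mpow_Suc:
  assumes "r \<ge> 1"
  shows "Mpow n m T (Suc r) i j = (\<Sum>ks\<in>{ks. valid_idx n (m-1) ks}. T (i#ks) * (\<Prod>l<m-1. Mpow n m T r (ks!l) j))"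
proof -
  have "tpow n m T (Suc r) (i # replicate ((m - 1) ^ Suc r) j)
      = (\<Sum>ks\<in>{ks. valid_idx n (m-1) ks}. T (i#ks) *
          (\<Prod>l<m-1. tpow n m T r ((ks ! l) # (chunks (m - 1) ((m-1)^r) (replicate ((m - 1) ^ Suc r) j) ! l))))"
    using assms by (simp add: tprod_def)
  also have "\<dots> = (\<Sum>ks\<in>{ks. valid_idx n (m-1) ks}. T (i#ks) * (\<Prod>l<m-1. Mpow n m T r (ks!l) j))"
    by (intro sum.cong refl arg_cong2[where f="(*)"] prod.cong)
       (simp_all add: chunks_rep Mpow_def majorization_def tpow_order_def)
  finally show ?thesis by (simp add: Mpow_def majorization_def tpow_order_def)
qed

lemma fin_valid: "finite {ks. valid_idx n k ks}"
proof -
  have "{ks. valid_idx n k ks} = {xs. set xs \<subseteq> {..<n} \<and> length xs = k}"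
    by (auto simp: valid_idx_def)
  then show ?thesis using finite_lists_length_eq[of "{..<n}" k] by simp
qed

lemma valid_nth: "valid_idx n k ks \<Longrightarrow> l < k \<Longrightarrow> ks ! l < n"
proof -
  assume v: "valid_idx n k ks" and l: "l < k"
  then have "ks ! l \<in> set ks" by (simp add: valid_idx_def)
  then show "ks ! l < n" using v by (auto simp: valid_idx_def)
qed

lemma sum_pos_iff:
  fixes f :: "'a \<Rightarrow> real"
  assumes "finite S" "\<And>x. x \<in> S \<Longrightarrow> f x \<ge> 0"
  shows "(\<Sum>x\<in>S. f x) > 0 \<longleftrightarrow> (\<exists>x\<in>S. f x > 0)"
proof
  assume "(\<Sum>x\<in>S. f x) > 0"
  show "\<exists>x\<in>S. f x > 0"
  proof (rule ccontr)
    assume "\<not> (\<exists>x\<in>S. f x > 0)"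
    then have "\<forall>x\<in>S. f x \<le> 0" by auto
    then have "(\<Sum>x\<in>S. f x) \<le> 0" by (intro sum_nonpos) auto
    with \<open>(\<Sum>x\<in>S. f x) > 0\<close> show False by linarith
  qed
next
  assume "\<exists>x\<in>S. f x > 0"
  then obtain x where "x \<in> S" "f x > 0" by blast
  then have "f x \<le> (\<Sum>x\<in>S. f x)" using assms by (intro member_le_sum) auto
  then show "(\<Sum>x\<in>S. f x) > 0" using \<open>f x > 0\<close> by linarith
qed

lemma prod_pos_iff:
  fixes f :: "nat \<Rightarrow> real"
  assumes "\<And>x. x < k \<Longrightarrow> f x \<ge> 0"
  shows "(\<Prod>x<k. f x) > 0 \<longleftrightarrow> (\<forall>x<k. f x > 0)"
proof
  assume h: "(\<Prod>x<k. f x) > 0"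
  show "\<forall>x<k. f x > 0"
  proof (intro allI impI)
    fix x assume "x < k"
    have "f x \<noteq> 0"
    proof
      assume "f x = 0"
      then have "(\<Prod>x<k. f x) = 0" using \<open>x<k\<close> \<open>f x = 0\<close> by (metis finite_lessThan lessThan_iff prod_zero)
      then show False using h by linarith
    qed
    then show "f x > 0" using assms \<open>x<k\<close> by (simp add: less_le)
  qed
next
  assume "\<forall>x<k. f x > 0"
  then show "(\<Prod>x<k. f x) > 0" by (intro prod_pos) auto
qed

lemma Mpow_nonneg:
  assumes "nonneg_tensor n m T" "m \<ge> 1" "r \<ge> 1" "i < n" "j < n"
  shows "Mpow n m T r i j \<ge> 0"
  using assms(3-4)
proof (induction r arbitrary: i rule: dec_induct)
  case base
  have "valid_idx n m (i # replicate (m-1) j)"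
    using assms base unfolding valid_idx_def by auto
  then show ?case using assms(1) Mpow_one[of n m T i j] by (simp add: nonneg_tensor_def)
next
  case (step r)
  show ?case unfolding Mpow_Suc[OF step(1)]
  proof (intro sum_nonneg mult_nonneg_nonneg prod_nonneg)
    fix ks assume "ks \<in> {ks. valid_idx n (m-1) ks}"
    then have v: "valid_idx n (m-1) ks" by simp
    then have "valid_idx n m (i#ks)" using step assms(2) by (auto simp: valid_idx_def)
    then show "T (i#ks) \<ge> 0" using assms(1) by (simp add: nonneg_tensor_def)
    fix l assume "l \<in> {..<m-1}"
    then show "Mpow n m T r (ks!l) j \<ge> 0" using step.IH valid_nth[OF v] by simp
  qed
qed

lemma Mpow_Suc_pos:
  assumes "nonneg_tensor n m T" "m \<ge> 1" "r \<ge> 1" "i < n" "j < n"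
  shows "Mpow n m T (Suc r) i j > 0 \<longleftrightarrow>
     (\<exists>ks. valid_idx n (m-1) ks \<and> T (i#ks) > 0 \<and> (\<forall>l<m-1. Mpow n m T r (ks!l) j > 0))"
proof -
  have tn: "T (i#ks) \<ge> 0" if "valid_idx n (m-1) ks" for ks
  proof -
    have "valid_idx n m (i#ks)" using that assms by (auto simp: valid_idx_def)
    then show ?thesis using assms(1) by (simp add: nonneg_tensor_def)
  qed
  have mn: "Mpow n m T r (ks!l) j \<ge> 0" if "valid_idx n (m-1) ks" "l < m-1" for ks l
    using Mpow_nonneg[OF assms(1,2,3) valid_nth[OF that] assms(5)] .
  have pn: "(\<Prod>l<m-1. Mpow n m T r (ks!l) j) \<ge> 0" if "valid_idx n (m-1) ks" for ks
    using mn[OF that] by (intro prod_nonneg) auto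
  have "Mpow n m T (Suc r) i j > 0 \<longleftrightarrow>
     (\<exists>ks\<in>{ks. valid_idx n (m-1) ks}. T (i#ks) * (\<Prod>l<m-1. Mpow n m T r (ks!l) j) > 0)"
    unfolding Mpow_Suc[OF assms(3)]
    using tn pn by (intro sum_pos_iff fin_valid) auto
  also have "\<dots> \<longleftrightarrow> (\<exists>ks. valid_idx n (m-1) ks \<and> T (i#ks) > 0 \<and> (\<forall>l<m-1. Mpow n m T r (ks!l) j > 0))"
  proof -
    have "T (i#ks) * (\<Prod>l<m-1. Mpow n m T r (ks!l) j) > 0 \<longleftrightarrow> T (i#ks) > 0 \<and> (\<forall>l<m-1. Mpow n m T r (ks!l) j > 0)"
      if "valid_idx n (m-1) ks" for ks
    proof -
      have pp: "(\<Prod>l<m-1. Mpow n m T r (ks!l) j) > 0 \<longleftrightarrow> (\<forall>l<m-1. Mpow n m T r (ks!l) j > 0)"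
        using prod_pos_iff[of "m-1" "\<lambda>l. Mpow n m T r (ks!l) j"] mn[OF that] by blast
      show ?thesis using tn[OF that] pn[OF that] pp by (auto simp add: zero_less_mult_iff)
    qed
    then show ?thesis by auto
  qed
  finally show ?thesis .
qed

lemma pos_equiv:
  assumes "m \<ge> 2" "nonneg_tensor n m A"
    and B: "\<And>xs. B xs = (if xs ! m = xs ! (m - 1) then A (take m xs) else 0)"
    and "r \<ge> 1" "i < n" "j < n"
  shows "Mpow n (m+1) B r i j > 0 \<longleftrightarrow> Mpow n m A r i j > 0"
  using assms(4,5)
proof (induction r arbitrary: i rule: dec_induct)
  case base
  have "(i # replicate m j) ! m = j" using assms(1) by (cases m) auto
  moreover have "(i # replicate m j) ! (m-1) = j" using assms(1) by (auto simp: nth_Cons')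
  moreover have "take m (i # replicate m j) = i # replicate (m-1) j" using assms(1) by (simp add: take_Cons' take_replicate)
  ultimately show ?case using Mpow_one[of n m A i j] Mpow_one[of n "m+1" B i j] B[of "i # replicate m j"] by simp
next
  case (step r)
  have nB: "nonneg_tensor n (m+1) B"
    unfolding nonneg_tensor_def
  proof (intro allI impI)
    fix xs assume "valid_idx n (m+1) xs"
    then have "valid_idx n m (take m xs)" unfolding valid_idx_def
      by (auto dest: in_set_takeD)
    then show "B xs \<ge> 0" using assms(2) by (simp add: B nonneg_tensor_def)
  qed
  have "Mpow n (m+1) B (Suc r) i j > 0 \<longleftrightarrow>
     (\<exists>ks. valid_idx n m ks \<and> B (i#ks) > 0 \<and> (\<forall>l<m. Mpow n (m+1) B r (ks!l) j > 0))"
    using Mpow_Suc_pos[OF nB _ step(1) step.prems assms(6)] by simp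
  also have "\<dots> \<longleftrightarrow> (\<exists>ks. valid_idx n (m-1) ks \<and> A (i#ks) > 0 \<and> (\<forall>l<m-1. Mpow n m A r (ks!l) j > 0))"
  proof
    assume "\<exists>ks. valid_idx n m ks \<and> B (i#ks) > 0 \<and> (\<forall>l<m. Mpow n (m+1) B r (ks!l) j > 0)"
    then obtain ks where v: "valid_idx n m ks" and b: "B (i#ks) > 0"
      and p: "\<forall>l<m. Mpow n (m+1) B r (ks!l) j > 0" by blast
    have "take m (i#ks) = i # take (m-1) ks" using assms(1) by (cases m) auto
    then have a: "A (i # take (m-1) ks) > 0" using b by (simp add: B split: if_splits)
    have v': "valid_idx n (m-1) (take (m-1) ks)" using v unfolding valid_idx_def
      by (auto dest: in_set_takeD)
    have "\<forall>l<m-1. Mpow n m A r (take (m-1) ks ! l) j > 0"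
    proof (intro allI impI)
      fix l assume l: "l < m-1"
      then have "Mpow n (m+1) B r (ks!l) j > 0" using p by simp
      then show "Mpow n m A r (take (m-1) ks ! l) j > 0"
        using step.IH[of "ks!l"] valid_nth[OF v, of l] l by simp
    qed
    then show "\<exists>ks. valid_idx n (m-1) ks \<and> A (i#ks) > 0 \<and> (\<forall>l<m-1. Mpow n m A r (ks!l) j > 0)"
      using a v' by blast
  next
    assume "\<exists>ks. valid_idx n (m-1) ks \<and> A (i#ks) > 0 \<and> (\<forall>l<m-1. Mpow n m A r (ks!l) j > 0)"
    then obtain ks where v: "valid_idx n (m-1) ks" and a: "A (i#ks) > 0"
      and p: "\<forall>l<m-1. Mpow n m A r (ks!l) j > 0" by blast
    define js where "js = ks @ [ks ! (m-2)]"
    have len: "length ks = m-1" using v by (simp add: valid_idx_def)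
    have nth: "js ! l = (if l < m-1 then ks ! l else ks ! (m-2))" if "l < m" for l
      using that len unfolding js_def by (auto simp: nth_append)
    have "ks ! (m-2) < n" using valid_nth[OF v, of "m-2"] assms(1) by simp
    then have vj: "valid_idx n m js" using v len assms(1) unfolding valid_idx_def js_def
      by auto
    have c1: "(i#js) ! m = js ! (m-1)" using assms(1) by (simp add: nth_Cons')
    have c2: "(i#js) ! (m-1) = js ! (m-2)" using assms(1) by (simp add: nth_Cons' numeral_2_eq_2)
    have c3: "js ! (m-1) = ks ! (m-2)" using nth[of "m-1"] assms(1) by simp
    have c4: "js ! (m-2) = ks ! (m-2)" using nth[of "m-2"] assms(1) by simp
    have "(i#js) ! m = (i#js) ! (m-1)" using c1 c2 c3 c4 by simp
    moreover have "take m (i#js) = i # ks" using len assms(1) unfolding js_def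
      by (cases m) auto
    ultimately have b: "B (i#js) > 0" using a by (simp add: B)
    have "\<forall>l<m. Mpow n (m+1) B r (js!l) j > 0"
    proof (intro allI impI)
      fix l assume l: "l < m"
      define l' where "l' = (if l < m-1 then l else m-2)"
      have l': "l' < m-1" "js ! l = ks ! l'" using l assms(1) nth[OF l] unfolding l'_def by auto
      show "Mpow n (m+1) B r (js!l) j > 0"
        using step.IH[of "ks!l'"] valid_nth[OF v l'(1)] p l' by simp
    qed
    then show "\<exists>ks. valid_idx n m ks \<and> B (i#ks) > 0 \<and> (\<forall>l<m. Mpow n (m+1) B r (ks!l) j > 0)"
      using vj b by blast
  qed
  also have "\<dots> \<longleftrightarrow> Mpow n m A (Suc r) i j > 0"
    using Mpow_Suc_pos[OF assms(2) _ step(1) step.prems assms(6)] assms(1) by simp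
  finally show ?case .
qed

theorem proposition4p9:
  fixes n m :: nat and A B :: tensor
  assumes "m \<ge> 2"
    and "nonneg_tensor n m A"
    and "\<And>xs. B xs = (if xs ! m = xs ! (m - 1) then A (take m xs) else 0)"
  shows "(\<forall>j<n. (j_primitive n m A j \<longleftrightarrow> j_primitive n (m + 1) B j) \<and>
                (j_primitive n m A j \<longrightarrow> j_prim_exponent n (m + 1) B j = j_prim_exponent n m A j))
       \<and> (primitive n m A \<longleftrightarrow> primitive n (m + 1) B)
       \<and> (primitive n m A \<longrightarrow> prim_exponent n (m + 1) B = prim_exponent n m A)"
proof -
  have eq: "\<And>r i j. r \<ge> 1 \<Longrightarrow> i < n \<Longrightarrow> j < n \<Longrightarrow>
      Mpow n (m+1) B r i j > 0 \<longleftrightarrow> Mpow n m A r i j > 0"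
    using pos_equiv[OF assms] by blast
  have e1: "\<And>j. j < n \<Longrightarrow> (\<lambda>k. k \<ge> 1 \<and> (\<forall>u<n. Mpow n (m+1) B k u j > 0))
      = (\<lambda>k. k \<ge> 1 \<and> (\<forall>u<n. Mpow n m A k u j > 0))"
    using eq by (intro ext) blast
  have e2: "(\<lambda>r. r \<ge> 1 \<and> (\<forall>i<n. \<forall>j<n. Mpow n (m+1) B r i j > 0))
      = (\<lambda>r. r \<ge> 1 \<and> (\<forall>i<n. \<forall>j<n. Mpow n m A r i j > 0))"
    using eq by (intro ext) blast
  have "j_primitive n m A j \<longleftrightarrow> j_primitive n (m + 1) B j" if "j < n" for j
    unfolding j_primitive_def using e1[OF that] by simp
  moreover have "j_prim_exponent n (m + 1) B j = j_prim_exponent n m A j" if "j < n" for j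
    unfolding j_prim_exponent_def using e1[OF that] by simp
  moreover have "primitive n m A \<longleftrightarrow> primitive n (m + 1) B"
    unfolding primitive_def using e2 by simp
  moreover have "prim_exponent n (m + 1) B = prim_exponent n m A"
    unfolding prim_exponent_def using e2 by simp
  ultimately show ?thesis by blast
qed

end
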